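(* Fix a prime $p$ and define $\mathbb{L}_p:\mathbb{Z}[\tfrac1p]\to[0,\infty)$ by $\mathbb{L}_p(r)=|r|+\|r\|_p$. Then $\mathbb{L}_p$ is a length function on the group $\mathbb{Z}[\tfrac1p]$ which is proper and unbounded.
   Context: $\mathbb{Z}[\tfrac1p]=\{a/p^k: a\in\mathbb{Z},k\in\mathbb{N}\}\subset\mathbb{Q}$, viewed as a discrete abelian group under addition; $|r|$ is the usual absolute value. The $p$-adic norm on $\mathbb{Q}$ is $\|0\|_p=0$ and $\|r\|_p=p^{-n}$ if $r=\frac{ap^n}{b}$ with $a,n\in\mathbb{Z}$, $b\in\mathbb{Z}\setminus\{0\}$, $\gcd(a,p)=\gcd(b,p)=\gcd(a,b)=1$. A length function on a discrete group $\Gamma$ is a map $\mathbb{L}:\Gamma\to[0,\infty)$ with $\mathbb{L}(\gamma)=0$ iff $\gamma=e$, $\mathbb{L}(\gamma^{-1})=\mathbb{L}(\gamma)$, and $\mathbb{L}(\gamma_1\gamma_2)\le\mathbb{L}(\gamma_1)+\mathbb{L}(\gamma_2)$. It is proper if $B_{\mathbb{L}}(R)=\{\gamma\in\Gamma:\mathbb{L}(\gamma)\le R\}$ is finite for every $0\le R<\infty$. *)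

theory Defs
  imports "HOL-Computational_Algebra.Computational_Algebra"
begin

definition Zinvp :: "nat \<Rightarrow> rat set" where
  "Zinvp p = {r. \<exists>(a::int) (k::nat). r = of_int a / of_nat p ^ k}"

definition padic_norm :: "nat \<Rightarrow> rat \<Rightarrow> real" where
  "padic_norm p r = (if r = 0 then 0 else
     (let (a, b) = quotient_of r;
          n = int (multiplicity (int p) a) - int (multiplicity (int p) b)
      in real p powr (- real_of_int n)))"

definition is_length_function :: "'a::ab_group_add set \<Rightarrow> ('a \<Rightarrow> real) \<Rightarrow> bool" where
  "is_length_function G L \<longleftrightarrow>
     (\<forall>g\<in>G. L g \<ge> 0) \<and>
     (\<forall>g\<in>G. L g = 0 \<longleftrightarrow> g = 0) \<and>
     (\<forall>g\<in>G. L (- g) = L g) \<and>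
     (\<forall>g\<in>G. \<forall>h\<in>G. L (g + h) \<le> L g + L h)"

definition proper_length :: "'a set \<Rightarrow> ('a \<Rightarrow> real) \<Rightarrow> bool" where
  "proper_length G L \<longleftrightarrow> (\<forall>R\<ge>0. finite {g\<in>G. L g \<le> R})"

definition unbounded_length :: "'a set \<Rightarrow> ('a \<Rightarrow> real) \<Rightarrow> bool" where
  "unbounded_length G L \<longleftrightarrow> (\<forall>C. \<exists>g\<in>G. L g > C)"

definition Lp :: "nat \<Rightarrow> rat \<Rightarrow> real" where
  "Lp p r = real_of_rat \<bar>r\<bar> + padic_norm p r"

end

theory Submission
  imports Defs
begin

definition vp :: "nat \<Rightarrow> int \<Rightarrow> int" where
  "vp p a = int (multiplicity (int p) a)"

lemma padic_nonneg: "padic_norm p r \<ge> 0"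
  unfolding padic_norm_def by (auto simp: Let_def split: prod.splits)

lemma padic_zero [simp]: "padic_norm p 0 = 0"
  unfolding padic_norm_def by simp

lemma padic_frac:
  assumes p: "prime p" and a: "a \<noteq> 0" and b: "b \<noteq> 0"
  shows "padic_norm p (of_int a / of_int b) = real p powr (- real_of_int (vp p a - vp p b))"
proof -
  define r where "r = (of_int a / of_int b :: rat)"
  have r0: "r \<noteq> 0" using a b by (simp add: r_def)
  obtain x y where q: "quotient_of r = (x, y)" by (cases "quotient_of r") auto
  have y: "y > 0" using quotient_of_denom_pos[OF q] .
  have rxy: "r = of_int x / of_int y" using quotient_of_div[OF q] .
  have x: "x \<noteq> 0" using r0 rxy by auto
  have "of_int a / of_int b = (of_int x / of_int y :: rat)" using rxy r_def by simp
  hence "of_int (a * y) = (of_int (x * b) :: rat)" using b y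
    by (simp add: field_simps)
  hence eq: "a * y = x * b" by (simp only: of_int_eq_iff)
  have pe: "prime_elem (int p)" using p by simp
  have "multiplicity (int p) (a * y) = multiplicity (int p) (x * b)" using eq by simp
  hence "multiplicity (int p) a + multiplicity (int p) y = multiplicity (int p) x + multiplicity (int p) b"
    using prime_elem_multiplicity_mult_distrib[OF pe] a b x y by (metis less_irrefl)
  hence "int (multiplicity (int p) x) - int (multiplicity (int p) y) = vp p a - vp p b"
    unfolding vp_def by linarith
  hence "real (multiplicity (int p) y) - real (multiplicity (int p) x) = real_of_int (vp p b) - real_of_int (vp p a)"
    by (metis (mono_tags, opaque_lifting) minus_diff_eq of_int_diff of_int_of_nat_eq)
  thus ?thesis using r0 q unfolding padic_norm_def r_def[symmetric] by (simp add: Let_def)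
qed

lemma padic_uminus:
  assumes p: "prime p"
  shows "padic_norm p (- r) = padic_norm p r"
proof (cases "r = 0")
  case True thus ?thesis by simp
next
  case False
  obtain x y where q: "quotient_of r = (x, y)" by (cases "quotient_of r") auto
  have y: "y > 0" using quotient_of_denom_pos[OF q] .
  have rxy: "r = of_int x / of_int y" using quotient_of_div[OF q] .
  have x: "x \<noteq> 0" using False rxy by auto
  have "- r = of_int (-x) / of_int y" using rxy by simp
  thus ?thesis using padic_frac[OF p x] padic_frac[OF p, of "-x" y] x y rxy
    by (simp add: vp_def)
qed

lemma padic_tri:
  assumes p: "prime p"
  shows "padic_norm p (g + h) \<le> padic_norm p g + padic_norm p h"
proof -
  consider "g = 0" | "h = 0" | "g + h = 0" | "g \<noteq> 0" "h \<noteq> 0" "g + h \<noteq> 0" by blast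
  thus ?thesis
  proof cases
    case 1 thus ?thesis using padic_nonneg[of p h] by simp
  next
    case 2 thus ?thesis using padic_nonneg[of p g] by simp
  next
    case 3 thus ?thesis using padic_nonneg[of p g] padic_nonneg[of p h]
      by (simp add: padic_norm_def)
  next
    case 4
    obtain a b where q: "quotient_of g = (a, b)" by (cases "quotient_of g") auto
    have b: "b > 0" using quotient_of_denom_pos[OF q] .
    have gab: "g = of_int a / of_int b" using quotient_of_div[OF q] .
    have a: "a \<noteq> 0" using 4 gab by auto
    obtain c d where q2: "quotient_of h = (c, d)" by (cases "quotient_of h") auto
    have d: "d > 0" using quotient_of_denom_pos[OF q2] .
    have hcd: "h = of_int c / of_int d" using quotient_of_div[OF q2] .
    have c: "c \<noteq> 0" using 4 hcd by auto
    have sum: "g + h = of_int (a * d + c * b) / of_int (b * d)"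
      using gab hcd b d by (simp add: field_simps)
    have s0: "a * d + c * b \<noteq> 0"
    proof
      assume "a * d + c * b = 0"
      hence "of_int (a * d + c * b) = (0::rat)" by simp
      thus False using sum 4 by simp
    qed
    have bd: "b * d \<noteq> 0" using b d by simp
    have pe: "prime_elem (int p)" using p by simp
    have nu: "\<not> is_unit (int p)" using pe prime_elem_not_unit by blast
    have p1: "real p > 1" using p prime_gt_1_nat by auto
    have mbd: "vp p (b*d) = vp p b + vp p d"
      unfolding vp_def using prime_elem_multiplicity_mult_distrib[OF pe] b d by simp
    have mad: "vp p (a*d) = vp p a + vp p d"
      unfolding vp_def using prime_elem_multiplicity_mult_distrib[OF pe] a d by simp
    have mcb: "vp p (c*b) = vp p c + vp p b"
      unfolding vp_def using prime_elem_multiplicity_mult_distrib[OF pe] c b by simp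
    define e where "e = min (multiplicity (int p) (a*d)) (multiplicity (int p) (c*b))"
    have "int p ^ e dvd a * d" unfolding e_def by (rule multiplicity_dvd') simp
    moreover have "int p ^ e dvd c * b" unfolding e_def by (rule multiplicity_dvd') simp
    ultimately have "int p ^ e dvd a * d + c * b" by simp
    hence ge: "e \<le> multiplicity (int p) (a * d + c * b)"
      using multiplicity_geI[OF s0 nu] by blast
    have ng: "padic_norm p (g + h) = real p powr (- real_of_int (vp p (a*d+c*b) - vp p (b*d)))"
      using padic_frac[OF p s0 bd] sum by simp
    have gg: "padic_norm p g = real p powr (- real_of_int (vp p a - vp p b))"
      using padic_frac[OF p a] b gab by simp
    have hh: "padic_norm p h = real p powr (- real_of_int (vp p c - vp p d))"
      using padic_frac[OF p c] d hcd by simp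
    have "padic_norm p (g + h) \<le> padic_norm p g \<or> padic_norm p (g + h) \<le> padic_norm p h"
    proof (cases "multiplicity (int p) (a*d) \<le> multiplicity (int p) (c*b)")
      case True
      hence "vp p a - vp p b \<le> vp p (a*d+c*b) - vp p (b*d)"
        using ge mbd mad unfolding e_def vp_def by simp
      hence "padic_norm p (g + h) \<le> padic_norm p g" unfolding ng gg
        using p1 by (intro powr_mono) auto
      thus ?thesis by simp
    next
      case False
      hence "vp p c - vp p d \<le> vp p (a*d+c*b) - vp p (b*d)"
        using ge mbd mcb unfolding e_def vp_def by simp
      hence "padic_norm p (g + h) \<le> padic_norm p h" unfolding ng hh
        using p1 by (intro powr_mono) auto
      thus ?thesis by simp
    qed
    thus ?thesis using padic_nonneg[of p g] padic_nonneg[of p h] by linarith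
  qed
qed


lemma Zinvp_normal:
  assumes p: "prime p" and g: "g \<in> Zinvp p"
  shows "\<exists>a k. g = of_int a / of_nat p ^ k \<and> (k = 0 \<or> \<not> int p dvd a)"
proof -
  obtain a0 k0 where g0: "g = of_int a0 / of_nat p ^ k0" using g unfolding Zinvp_def by auto
  have p0: "p \<noteq> 0" using p by auto
  have "\<And>a. g = of_int a / of_nat p ^ k0 \<Longrightarrow> \<exists>a k. g = of_int a / of_nat p ^ k \<and> (k = 0 \<or> \<not> int p dvd a)"
  proof (induction k0)
    case 0 thus ?case by blast
  next
    case (Suc k)
    show ?case
    proof (cases "int p dvd a")
      case True
      then obtain b where ab: "a = int p * b" by (auto elim: dvdE)
      have "g = of_int b / of_nat p ^ k" using Suc.prems ab p0 by simp
      thus ?thesis using Suc.IH by blast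
    next
      case False thus ?thesis using Suc.prems by blast
    qed
  qed
  thus ?thesis using g0 by blast
qed

lemma of_rat_abs_int: "real_of_rat \<bar>of_int a\<bar> = \<bar>real_of_int a\<bar>"
  by (metis of_int_abs of_rat_of_int_eq)

lemma Lp_nonneg: "Lp p g \<ge> 0"
  unfolding Lp_def using padic_nonneg[of p g] by simp

theorem lemma3p4:
  fixes p :: nat
  assumes "prime p"
  shows "is_length_function (Zinvp p) (Lp p) \<and> proper_length (Zinvp p) (Lp p)
         \<and> unbounded_length (Zinvp p) (Lp p)"
proof (intro conjI)
  have p: "prime p" by fact
  have p0: "p \<noteq> 0" using p by auto
  have p2: "p \<ge> 2" using p prime_ge_2_nat by blast
  show "is_length_function (Zinvp p) (Lp p)"
    unfolding is_length_function_def
  proof (intro conjI ballI)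
    fix g show "Lp p g \<ge> 0" by (rule Lp_nonneg)
  next
    fix g show "(Lp p g = 0) = (g = 0)"
    proof
      assume "Lp p g = 0"
      moreover have "real_of_rat \<bar>g\<bar> \<ge> 0" by simp
      ultimately have "real_of_rat \<bar>g\<bar> = 0" unfolding Lp_def using padic_nonneg[of p g] by linarith
      thus "g = 0" by simp
    qed (simp add: Lp_def)
  next
    fix g show "Lp p (- g) = Lp p g" unfolding Lp_def using padic_uminus[OF p] by simp
  next
    fix g h
    have "real_of_rat \<bar>g + h\<bar> \<le> real_of_rat (\<bar>g\<bar> + \<bar>h\<bar>)"
      by (simp only: of_rat_less_eq abs_triangle_ineq)
    thus "Lp p (g + h) \<le> Lp p g + Lp p h" unfolding Lp_def
      using padic_tri[OF p, of g h] by (simp add: of_rat_add)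
  qed
  show "proper_length (Zinvp p) (Lp p)"
    unfolding proper_length_def
  proof (intro allI impI)
    fix R :: real assume R: "R \<ge> 0"
    define N where "N = nat \<lceil>R + R * R\<rceil>"
    have "{g \<in> Zinvp p. Lp p g \<le> R} \<subseteq>
          (\<lambda>(a, k). of_int a / of_nat p ^ k) ` ({- int N..int N} \<times> {..N})"
    proof
      fix g assume gin: "g \<in> {g \<in> Zinvp p. Lp p g \<le> R}"
      hence gZ: "g \<in> Zinvp p" and gL: "Lp p g \<le> R" by auto
      obtain a k where gak: "g = of_int a / of_nat p ^ k" and nf: "k = 0 \<or> \<not> int p dvd a"
        using Zinvp_normal[OF p gZ] by blast
      have absg: "real_of_rat \<bar>g\<bar> \<le> R" using gL padic_nonneg[of p g] unfolding Lp_def by linarith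
      have rg: "real_of_rat \<bar>g\<bar> = \<bar>real_of_int a\<bar> / real p ^ k"
        using gak by (simp add: of_rat_divide of_rat_power abs_divide of_rat_abs_int)
      have bounds: "\<bar>real_of_int a\<bar> \<le> R + R * R \<and> k \<le> R + R * R"
      proof (cases "k = 0")
        case True
        have "R * R \<ge> 0" using R by simp
        moreover have "\<bar>real_of_int a\<bar> \<le> R" using absg rg True by simp
        ultimately show ?thesis using R True by linarith
      next
        case False
        hence nd: "\<not> int p dvd a" using nf by simp
        hence a0: "a \<noteq> 0" by auto
        have pk0: "int p ^ k \<noteq> 0" using p0 by simp
        have "g = of_int a / of_int (int p ^ k)" using gak by simp
        hence "padic_norm p g = real p powr (- real_of_int (vp p a - vp p (int p ^ k)))"
          using padic_frac[OF p a0 pk0] by simp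
        moreover have "vp p a = 0" unfolding vp_def using nd not_dvd_imp_multiplicity_0 by simp
        moreover have "vp p (int p ^ k) = int k" unfolding vp_def using p by simp
        ultimately have "padic_norm p g = real p ^ k" using p0 by (simp add: powr_realpow)
        moreover have "real_of_rat \<bar>g\<bar> \<ge> 0" by simp
        ultimately have pkR: "real p ^ k \<le> R" using gL unfolding Lp_def by linarith
        have "k < 2 ^ k" by (rule less_exp)
        also have "(2::nat) ^ k \<le> p ^ k" using p2 by (rule power_mono) simp
        finally have "real k \<le> real (p ^ k)" by simp
        hence kR: "real k \<le> R" using pkR by (simp only: of_nat_power)
        have pkpos: "real p ^ k > 0" using p0 by simp
        have "\<bar>real_of_int a\<bar> = real_of_rat \<bar>g\<bar> * real p ^ k" using rg pkpos by simp
        also have "\<dots> \<le> R * R" using absg pkR pkpos R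
          by (meson mult_mono of_rat_less_eq abs_ge_zero less_imp_le zero_le_of_rat_iff)
        finally show ?thesis using kR R by simp
      qed
      have "\<bar>a\<bar> \<le> int N" using bounds unfolding N_def by linarith
      moreover have "k \<le> N" using bounds unfolding N_def by linarith
      ultimately show "g \<in> (\<lambda>(a, k). of_int a / of_nat p ^ k) ` ({- int N..int N} \<times> {..N})"
        using gak by (auto intro!: image_eqI[of _ _ "(a, k)"])
    qed
    thus "finite {g \<in> Zinvp p. Lp p g \<le> R}" by (rule finite_subset) simp
  qed
  show "unbounded_length (Zinvp p) (Lp p)"
    unfolding unbounded_length_def
  proof
    fix C :: real
    define n where "n = \<lceil>\<bar>C\<bar>\<rceil> + 1"
    have "(of_int n :: rat) \<in> Zinvp p" unfolding Zinvp_def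
      by (rule CollectI, rule exI[of _ n], rule exI[of _ 0]) simp
    moreover have "Lp p (of_int n) > C"
    proof -
      have "real_of_rat \<bar>of_int n\<bar> = \<bar>real_of_int n\<bar>" by (rule of_rat_abs_int)
      moreover have "\<bar>real_of_int n\<bar> > C" unfolding n_def by linarith
      ultimately show ?thesis unfolding Lp_def using padic_nonneg[of p "of_int n"] by linarith
    qed
    ultimately show "\<exists>g\<in>Zinvp p. C < Lp p g" by blast
  qed
qed

end
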